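(* Let $(\lambda,\vartheta,\zeta_0)$ be fluid model data as in the context with $z_0>0$. Then there exists a fluid model solution $z^*(\cdot)$ (with $z^*(0)=z_0$) which is maximal: for every fluid model solution $z(\cdot)$ with $z(0)=z_0$, $z(t)\le z^*(t)$ for all $t\ge0$.
   Context: $\overline{\mathbb R}_+=[0,\infty]$. Fluid model data: $\lambda>0$; $\vartheta$ a Borel probability measure on $\overline{\mathbb R}_+^2$ with $\vartheta(\{0\}\times\overline{\mathbb R}_+)=\vartheta(\overline{\mathbb R}_+\times\{0\})=\vartheta(\{(\infty,\infty)\})=0$, $(B,D)$ a random pair with law $\vartheta$, $\rho=\lambda\mathbf E[B]>1$; $\zeta_0$ a finite nonnegative Borel measure on $\overline{\mathbb R}_+^2$ with marginals free of atoms in $[0,\infty)$ and total mass $z_0$; $(B^0,D^0)$ has law $\zeta_0/z_0$. A fluid model solution is a continuous function $z:[0,\infty)\to[0,\infty)$ with $\inf_{t>a}z(t)>0$ for all $a>0$ satisfying $z(t)=z_0\mathbf P(B^0>S(0,t);D^0>t)+\lambda\int_0^t\mathbf P(B>S(s,t);D>t-s)ds$ for $t\ge0$, where $S(u,v)=\int_u^vz(s)^{-1}ds$. *)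

theory Defs
  imports "HOL-Probability.Probability"
begin

definition fluid_data ::
  "real \<Rightarrow> (ennreal \<times> ennreal) measure \<Rightarrow> (ennreal \<times> ennreal) measure \<Rightarrow> bool" where
  "fluid_data lam \<theta> \<zeta>0 \<longleftrightarrow>
     lam > 0 \<and>
     sets \<theta> = sets borel \<and> prob_space \<theta> \<and>
     emeasure \<theta> ({0} \<times> UNIV) = 0 \<and> emeasure \<theta> (UNIV \<times> {0}) = 0 \<and>
     emeasure \<theta> {(\<infinity>, \<infinity>)} = 0 \<and>
     ennreal lam * (\<integral>\<^sup>+ x. fst x \<partial>\<theta>) > 1 \<and>
     sets \<zeta>0 = sets borel \<and> finite_measure \<zeta>0 \<and>
     (\<forall>x. x \<noteq> \<infinity> \<longrightarrow> emeasure \<zeta>0 ({x} \<times> UNIV) = 0) \<and>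
     (\<forall>x. x \<noteq> \<infinity> \<longrightarrow> emeasure \<zeta>0 (UNIV \<times> {x}) = 0)"

definition total_mass :: "(ennreal \<times> ennreal) measure \<Rightarrow> real" where
  "total_mass \<zeta>0 = measure \<zeta>0 (space \<zeta>0)"

definition Sfun :: "(real \<Rightarrow> real) \<Rightarrow> real \<Rightarrow> real \<Rightarrow> real" where
  "Sfun z u v = integral {u..v} (\<lambda>s. 1 / z s)"

text \<open>z0 P(B0 > S(0,t); D0 > t) = \<zeta>0{(b,d). b > S(0,t), d > t};
  P(B > S(s,t); D > t - s) = \<theta>{(b,d). b > S(s,t), d > t - s}.\<close>
definition fluid_solution ::
  "real \<Rightarrow> (ennreal \<times> ennreal) measure \<Rightarrow> (ennreal \<times> ennreal) measure \<Rightarrow> (real \<Rightarrow> real) \<Rightarrow> bool" where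
  "fluid_solution lam \<theta> \<zeta>0 z \<longleftrightarrow>
     continuous_on {0..} z \<and> (\<forall>t\<ge>0. z t \<ge> 0) \<and>
     (\<forall>a>0. \<exists>c>0. \<forall>t>a. z t \<ge> c) \<and>
     (\<forall>t\<ge>0. z t =
        measure \<zeta>0 {x. ennreal (Sfun z 0 t) < fst x \<and> ennreal t < snd x}
        + lam * integral {0..t}
            (\<lambda>s. measure \<theta> {x. ennreal (Sfun z s t) < fst x \<and> ennreal (t - s) < snd x}))"

end

theory Submission
  imports Defs
begin


lemma open_box_set: "open {x::ennreal\<times>ennreal. p < fst x \<and> q < snd x}"
  by (intro open_Collect_conj open_Collect_less continuous_intros)

lemma closed_fst_set: "closed {x::ennreal\<times>ennreal. fst x = p}"
  by (intro closed_Collect_eq continuous_intros)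
lemma closed_snd_set: "closed {x::ennreal\<times>ennreal. snd x = p}"
  by (intro closed_Collect_eq continuous_intros)

lemma measA:
  fixes M :: "(ennreal \<times> ennreal) measure"
  assumes fm: "finite_measure M" and sM: "sets M = sets borel"
    and a: "a \<longlonglongrightarrow> (a0::real)" and c: "c \<longlonglongrightarrow> (c0::real)"
    and na: "emeasure M {x. fst x = ennreal a0} = 0" and nc: "emeasure M {x. snd x = ennreal c0} = 0"
  shows "(\<lambda>n. measure M {x. ennreal (a n) < fst x \<and> ennreal (c n) < snd x}) \<longlonglongrightarrow> measure M {x. ennreal a0 < fst x \<and> ennreal c0 < snd x}"
proof -
  interpret finite_measure M by fact
  have meas: "\<And>p q. {x::ennreal\<times>ennreal. p < fst x \<and> q < snd x} \<in> sets M"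
    using open_box_set sM by (metis borel_open)
  have ind: "\<And>p q. measure M {x::ennreal\<times>ennreal. p < fst x \<and> q < snd x} = integral\<^sup>L M (indicator {x::ennreal\<times>ennreal. p < fst x \<and> q < snd x})"
    using meas by simp
  have N1: "{x. fst x = ennreal a0} \<in> null_sets M"
    using na closed_fst_set sM by (simp add: null_sets_def)
  have N2: "{x. snd x = ennreal c0} \<in> null_sets M"
    using nc closed_snd_set sM by (simp add: null_sets_def)
  have ea: "(\<lambda>n. ennreal (a n)) \<longlonglongrightarrow> ennreal a0" using a by (rule tendsto_ennrealI)
  have ec: "(\<lambda>n. ennreal (c n)) \<longlonglongrightarrow> ennreal c0" using c by (rule tendsto_ennrealI)
  have lim: "AE x in M. (\<lambda>n. indicator {x::ennreal\<times>ennreal. ennreal (a n) < fst x \<and> ennreal (c n) < snd x} x :: real) \<longlonglongrightarrow> indicator {x::ennreal\<times>ennreal. ennreal a0 < fst x \<and> ennreal c0 < snd x} x"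
    using AE_not_in[OF N1] AE_not_in[OF N2]
  proof eventually_elim
    case (elim x)
    have e1: "eventually (\<lambda>n. (ennreal (a n) < fst x) = (ennreal a0 < fst x)) sequentially"
    proof (cases "ennreal a0 < fst x")
      case True then show ?thesis using order_tendstoD(2)[OF ea True] by (auto elim: eventually_mono)
    next
      case False then have "fst x < ennreal a0" using elim by (auto simp: not_less le_less)
      then show ?thesis using order_tendstoD(1)[OF ea \<open>_ < ennreal a0\<close>] by (auto elim!: eventually_mono)
    qed
    have e2: "eventually (\<lambda>n. (ennreal (c n) < snd x) = (ennreal c0 < snd x)) sequentially"
    proof (cases "ennreal c0 < snd x")
      case True then show ?thesis using order_tendstoD(2)[OF ec True] by (auto elim: eventually_mono)
    next
      case False then have "snd x < ennreal c0" using elim by (auto simp: not_less le_less)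
      then show ?thesis using order_tendstoD(1)[OF ec \<open>_ < ennreal c0\<close>] by (auto elim!: eventually_mono)
    qed
    have "eventually (\<lambda>n. indicator {x::ennreal\<times>ennreal. ennreal (a n) < fst x \<and> ennreal (c n) < snd x} x = (indicator {x::ennreal\<times>ennreal. ennreal a0 < fst x \<and> ennreal c0 < snd x} x :: real)) sequentially"
      using eventually_conj[OF e1 e2] by (rule eventually_mono) (simp add: indicator_def)
    then show ?case by (rule tendsto_eventually)
  qed
  show ?thesis unfolding ind
    by (rule integral_dominated_convergence[where w="\<lambda>_. 1"])
       (use lim meas in \<open>auto simp: indicator_def\<close>)
qed

lemma negligible_countable': "countable (E::real set) \<Longrightarrow> negligible E"
proof -
  assume "countable E"
  then have "negligible (\<Union>((\<lambda>x. {x}) ` E))"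
    by (intro negligible_countable_Union) auto
  then show ?thesis by simp
qed

lemma atoms_fst:
  fixes M :: "(ennreal \<times> ennreal) measure"
  assumes fm: "finite_measure M" and sM: "sets M = sets borel"
  shows "countable {e. measure M {x. fst x = e} \<noteq> 0}"
proof -
  have m: "fst \<in> M \<rightarrow>\<^sub>M (borel :: ennreal measure)"
    using borel_measurable_continuous_onI[of "fst :: ennreal\<times>ennreal \<Rightarrow> ennreal"]
    by (simp add: continuous_on_fst continuous_on_id measurable_cong_sets[OF sM refl])
  have sp: "space M = UNIV" using sets_eq_imp_space_eq[OF sM] by simp
  interpret N: finite_measure "distr M borel fst"
    using finite_measure.finite_measure_distr[OF fm m] .
  have "\<And>e. measure (distr M borel fst) {e} = measure M {x. fst x = e}"
    using m by (subst measure_distr) (auto simp: sp vimage_def)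
  then show ?thesis using N.countable_support by simp
qed

lemma atoms_snd:
  fixes M :: "(ennreal \<times> ennreal) measure"
  assumes fm: "finite_measure M" and sM: "sets M = sets borel"
  shows "countable {e. measure M {x. snd x = e} \<noteq> 0}"
proof -
  have m: "snd \<in> M \<rightarrow>\<^sub>M (borel :: ennreal measure)"
    using borel_measurable_continuous_onI[of "snd :: ennreal\<times>ennreal \<Rightarrow> ennreal"]
    by (simp add: continuous_on_snd continuous_on_id measurable_cong_sets[OF sM refl])
  have sp: "space M = UNIV" using sets_eq_imp_space_eq[OF sM] by simp
  interpret N: finite_measure "distr M borel snd"
    using finite_measure.finite_measure_distr[OF fm m] .
  have "\<And>e. measure (distr M borel snd) {e} = measure M {x. snd x = e}"
    using m by (subst measure_distr) (auto simp: sp vimage_def)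
  then show ?thesis using N.countable_support by simp
qed

lemma intC:
  fixes M :: "(ennreal \<times> ennreal) measure"
  assumes pm: "prob_space M" and sM: "sets M = sets borel"
    and tn: "tn \<longlonglongrightarrow> (t::real)" and tpos: "\<And>n. 0 \<le> tn n"
    and int: "\<And>n. (\<lambda>s. measure M {x. ennreal (\<sigma> n s) < fst x \<and> ennreal (tn n - s) < snd x}) integrable_on {0..tn n}"
    and conv: "\<And>s. s \<in> {0..<t} \<Longrightarrow> (\<lambda>n. \<sigma> n s) \<longlonglongrightarrow> \<sigma>' s"
    and pos: "\<And>s. s \<in> {0..<t} \<Longrightarrow> 0 \<le> \<sigma>' s"
    and inj: "inj_on \<sigma>' {0..<t}"
  shows "(\<lambda>n. integral {0..tn n} (\<lambda>s. measure M {x. ennreal (\<sigma> n s) < fst x \<and> ennreal (tn n - s) < snd x}))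
     \<longlonglongrightarrow> integral {0..t} (\<lambda>s. measure M {x. ennreal (\<sigma>' s) < fst x \<and> ennreal (t - s) < snd x})"
proof -
  interpret prob_space M by fact
  have fm: "finite_measure M" by unfold_locales
  define G where "G n s = measure M {x. ennreal (\<sigma> n s) < fst x \<and> ennreal (tn n - s) < snd x}" for n s
  define G' where "G' s = measure M {x. ennreal (\<sigma>' s) < fst x \<and> ennreal (t - s) < snd x}" for s
  have "Bseq tn" using tn convergent_def convergent_imp_Bseq by blast
  then obtain K where K: "\<And>n. norm (tn n) \<le> K" unfolding Bseq_def by auto
  define T where "T = max K t"
  have tnT: "\<And>n. tn n \<le> T" using K unfolding T_def by (metis abs_le_D1 max.coboundedI1 real_norm_def)
  have tT: "t \<le> T" unfolding T_def by simp
  have t0: "0 \<le> t" using tn tpos by (metis LIMSEQ_le_const)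
  define E1 where "E1 = {s\<in>{0..<t}. measure M {x. fst x = ennreal (\<sigma>' s)} \<noteq> 0}"
  define E2 where "E2 = {s\<in>{0..<t}. measure M {x. snd x = ennreal (t - s)} \<noteq> 0}"
  define E where "E = {t} \<union> E1 \<union> E2"
  have cE1: "countable E1"
  proof (rule countable_image_inj_on[of "\<lambda>s. ennreal (\<sigma>' s)"])
    show "countable ((\<lambda>s. ennreal (\<sigma>' s)) ` E1)"
      by (rule countable_subset[OF _ atoms_fst[OF fm sM]]) (auto simp: E1_def)
    show "inj_on (\<lambda>s. ennreal (\<sigma>' s)) E1"
      using inj pos unfolding E1_def inj_on_def by (auto simp: ennreal_inj)
  qed
  have cE2: "countable E2"
  proof (rule countable_image_inj_on[of "\<lambda>s. ennreal (t - s)"])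
    show "countable ((\<lambda>s. ennreal (t - s)) ` E2)"
      by (rule countable_subset[OF _ atoms_snd[OF fm sM]]) (auto simp: E2_def)
    show "inj_on (\<lambda>s. ennreal (t - s)) E2"
      unfolding E2_def inj_on_def by (auto simp: ennreal_inj)
  qed
  have negE: "negligible E" unfolding E_def using cE1 cE2 by (intro negligible_countable') auto
  define F where "F n s = (if s \<in> E then 0 else if s \<in> {0..tn n} then G n s else 0)" for n s
  define F' where "F' s = (if s \<in> E then 0 else if s \<in> {0..t} then G' s else 0)" for s
  have eqn: "integral {0..tn n} (G n) = integral {0..T} (F n)" for n
  proof -
    have "integral {0..T} (\<lambda>s. if s \<in> {0..tn n} then G n s else 0) = integral {0..tn n} (G n)"
      using tnT[of n] by (subst integral_restrict_Int) (simp add: Int_absorb2)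
    moreover have "integral {0..T} (F n) = integral {0..T} (\<lambda>s. if s \<in> {0..tn n} then G n s else 0)"
      by (rule integral_spike[OF negE]) (auto simp: F_def)
    ultimately show ?thesis by simp
  qed
  have eq': "integral {0..t} G' = integral {0..T} F'"
  proof -
    have "integral {0..T} (\<lambda>s. if s \<in> {0..t} then G' s else 0) = integral {0..t} G'"
      using tT by (subst integral_restrict_Int) (simp add: Int_absorb2)
    moreover have "integral {0..T} F' = integral {0..T} (\<lambda>s. if s \<in> {0..t} then G' s else 0)"
      by (rule integral_spike[OF negE]) (auto simp: F'_def)
    ultimately show ?thesis by simp
  qed
  have intF: "F n integrable_on {0..T}" for n
  proof (rule integrable_spike[OF _ negE])
    show "(\<lambda>s. if s \<in> {0..tn n} then G n s else 0) integrable_on {0..T}"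
      using int[of n] tnT[of n] unfolding G_def by (subst integrable_restrict_Int) (simp add: Int_absorb2)
  qed (auto simp: F_def)
  have convF: "(\<lambda>n. F n s) \<longlonglongrightarrow> F' s" if "s \<in> {0..T}" for s
  proof (cases "s \<in> E")
    case True then show ?thesis by (simp add: F_def F'_def)
  next
    case False
    then have st: "s \<noteq> t" unfolding E_def by auto
    show ?thesis
    proof (cases "s < t")
      case True
      then have s0: "s \<in> {0..<t}" using that by auto
      have ev: "eventually (\<lambda>n. s < tn n) sequentially" using order_tendstoD(1)[OF tn True] .
      have "(\<lambda>n. G n s) \<longlonglongrightarrow> G' s"
        unfolding G_def G'_def
      proof (rule measA[OF fm sM conv[OF s0]])
        show "(\<lambda>n. tn n - s) \<longlonglongrightarrow> t - s" using tn by (intro tendsto_intros)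
        show "emeasure M {x. fst x = ennreal (\<sigma>' s)} = 0"
          using False s0 unfolding E_def E1_def by (simp add: emeasure_eq_measure)
        show "emeasure M {x. snd x = ennreal (t - s)} = 0"
          using False s0 unfolding E_def E2_def by (simp add: emeasure_eq_measure)
      qed
      moreover have "eventually (\<lambda>n. G n s = F n s) sequentially"
        using ev by (rule eventually_mono) (use False that in \<open>auto simp: F_def\<close>)
      ultimately have "(\<lambda>n. F n s) \<longlonglongrightarrow> G' s" by (rule Lim_transform_eventually)
      then show ?thesis using False that True by (simp add: F'_def)
    next
      case False': False
      then have ts: "t < s" using st by auto
      have ev: "eventually (\<lambda>n. tn n < s) sequentially" using order_tendstoD(2)[OF tn ts] .
      have "eventually (\<lambda>n. 0 = F n s) sequentially"
        using ev by (rule eventually_mono) (auto simp: F_def)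
      then have "(\<lambda>n. F n s) \<longlonglongrightarrow> 0" by (rule Lim_transform_eventually[OF tendsto_const])
      then show ?thesis using ts by (simp add: F'_def)
    qed
  qed
  have "(\<lambda>n. integral {0..T} (F n)) \<longlonglongrightarrow> integral {0..T} F'"
  proof (rule dominated_convergence(2)[where h="\<lambda>_. 1"])
    show "(\<lambda>_. 1::real) integrable_on {0..T}" by (rule integrable_const_ivl)
    show "norm (F n s) \<le> 1" for n s by (simp add: F_def G_def)
  qed (use intF convF in auto)
  then have "(\<lambda>n. integral {0..tn n} (G n)) \<longlonglongrightarrow> integral {0..t} G'" using eqn eq' by simp
  then show ?thesis unfolding G_def G'_def .
qed

definition good :: "(real \<Rightarrow> real) \<Rightarrow> bool" where
  "good w \<longleftrightarrow> (\<forall>t\<ge>0. 0 < w t) \<and> (\<forall>u v. 0 \<le> u \<longrightarrow> (\<lambda>s. 1 / w s) integrable_on {u..v})"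

definition Gf :: "(ennreal \<times> ennreal) measure \<Rightarrow> (real \<Rightarrow> real) \<Rightarrow> real \<Rightarrow> real \<Rightarrow> real" where
  "Gf M w s t = measure M {x. ennreal (Sfun w s t) < fst x \<and> ennreal (t - s) < snd x}"

definition Phi :: "real \<Rightarrow> (ennreal \<times> ennreal) measure \<Rightarrow> (ennreal \<times> ennreal) measure \<Rightarrow> (real \<Rightarrow> real) \<Rightarrow> real \<Rightarrow> real" where
  "Phi lam M Z w t = measure Z {x. ennreal (Sfun w 0 t) < fst x \<and> ennreal t < snd x} + lam * integral {0..t} (\<lambda>s. Gf M w s t)"

lemma good_int: "good w \<Longrightarrow> 0 \<le> u \<Longrightarrow> (\<lambda>s. 1 / w s) integrable_on {u..v}"
  unfolding good_def by auto

lemma good_pos: "good w \<Longrightarrow> 0 \<le> t \<Longrightarrow> 0 < w t"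
  unfolding good_def by auto

lemma S_nonneg: "good w \<Longrightarrow> 0 \<le> s \<Longrightarrow> 0 \<le> Sfun w s t"
  unfolding Sfun_def
proof (rule integral_nonneg[OF good_int])
  fix x assume "good w" "0 \<le> s" "x \<in> {s..t}"
  then have "0 < w x" using good_pos[of w x] by auto
  then show "0 \<le> 1 / w x" by simp
qed

lemma S_add: "good w \<Longrightarrow> 0 \<le> r \<Longrightarrow> r \<le> s \<Longrightarrow> s \<le> t \<Longrightarrow> Sfun w r t = Sfun w r s + Sfun w s t"
  unfolding Sfun_def using Henstock_Kurzweil_Integration.integral_combine[where a=r and c=s and b=t and f="\<lambda>s. 1 / w s"] good_int[where w=w and u=r and v=t] by simp


lemma S_upper:
  assumes "good w" "0 < c" "\<And>x. x \<in> {s..t} \<Longrightarrow> c \<le> w x" "0 \<le> s" "s \<le> t"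
  shows "Sfun w s t \<le> (t - s) / c"
proof -
  have "Sfun w s t \<le> integral {s..t} (\<lambda>_. 1 / c)"
    unfolding Sfun_def
  proof (rule integral_le[OF good_int[OF assms(1,4)]])
    fix x assume x: "x \<in> {s..t}"
    then have "0 < w x" using good_pos[OF assms(1)] assms(4) by auto
    then show "1 / w x \<le> 1 / c" using assms(2) assms(3)[OF x] by (simp add: frac_le)
  qed (rule integrable_const_ivl)
  also have "\<dots> = (t - s) / c" using assms by simp
  finally show ?thesis .
qed

lemma S_lower:
  assumes "good w" "0 < B" "\<And>x. x \<in> {s..t} \<Longrightarrow> w x \<le> B" "0 \<le> s" "s \<le> t"
  shows "(t - s) / B \<le> Sfun w s t"
proof -
  have "integral {s..t} (\<lambda>_. 1 / B) \<le> Sfun w s t"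
    unfolding Sfun_def
  proof (rule integral_le[OF _ good_int[OF assms(1,4)]])
    fix x assume x: "x \<in> {s..t}"
    then have "0 < w x" using good_pos[OF assms(1)] assms(4) by auto
    then show "1 / B \<le> 1 / w x" using assms(3)[OF x] by (simp add: frac_le)
  qed (rule integrable_const_ivl)
  moreover have "integral {s..t} (\<lambda>_. 1 / B) = (t - s) / B" using assms by simp
  ultimately show ?thesis using assms(5) by simp
qed

lemma S_antimono:
  assumes "good w1" "good w2" "\<And>x. 0 \<le> x \<Longrightarrow> w1 x \<le> w2 x" "0 \<le> s"
  shows "Sfun w2 s t \<le> Sfun w1 s t"
  unfolding Sfun_def
proof (rule integral_le[OF good_int[OF assms(2,4)] good_int[OF assms(1,4)]])
  fix x assume x: "x \<in> {s..t}"
  then have "0 < w1 x" using good_pos[OF assms(1)] assms(4) by auto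
  then show "1 / w2 x \<le> 1 / w1 x" using assms(3)[of x] x assms(4) by (simp add: frac_le)
qed

lemma box_mono:
  fixes M :: "(ennreal \<times> ennreal) measure"
  assumes "finite_measure M" "sets M = sets borel" "p' \<le> p" "q' \<le> q"
  shows "measure M {x. p < fst x \<and> q < snd x} \<le> measure M {x. p' < fst x \<and> q' < snd x}"
proof -
  have meas: "\<And>p q. {x::ennreal\<times>ennreal. p < fst x \<and> q < snd x} \<in> sets M"
    using open_box_set assms(2) by (metis borel_open)
  show ?thesis
    by (rule finite_measure.finite_measure_mono[OF assms(1) _ meas])
       (use assms in \<open>auto intro: le_less_trans\<close>)
qed

lemma G_mono:
  fixes M :: "(ennreal \<times> ennreal) measure"
  assumes "finite_measure M" "sets M = sets borel" "good w" "0 \<le> s1" "s1 \<le> s2" "s2 \<le> t"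
  shows "Gf M w s1 t \<le> Gf M w s2 t"
  unfolding Gf_def
proof (rule box_mono[OF assms(1,2)])
  show "ennreal (Sfun w s2 t) \<le> ennreal (Sfun w s1 t)"
    using S_add[OF assms(3,4,5,6)] S_nonneg[OF assms(3), of s1 s2] assms by (intro ennreal_leI) simp
  show "ennreal (t - s2) \<le> ennreal (t - s1)" using assms by (intro ennreal_leI) simp
qed

lemma G_int:
  fixes M :: "(ennreal \<times> ennreal) measure"
  assumes "finite_measure M" "sets M = sets borel" "good w" "0 \<le> t"
  shows "(\<lambda>s. Gf M w s t) integrable_on {0..t}"
  by (rule integrable_on_mono_on) (auto simp: mono_on_def intro!: G_mono[OF assms(1,2,3)])

lemma S_inj:
  assumes "good w" "0 < B" "\<And>x. x \<in> {0..t} \<Longrightarrow> w x \<le> B"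
  shows "inj_on (\<lambda>s. Sfun w s t) {0..<t}"
proof (rule linorder_inj_onI')
  fix i j assume ij: "i \<in> {0..<t}" "j \<in> {0..<t}" "i < j"
  have "(j - i) / B \<le> Sfun w i j"
    by (rule S_lower[OF assms(1,2)]) (use ij assms(3) in auto)
  moreover have "0 < (j - i) / B" using ij assms(2) by simp
  moreover have "Sfun w i t = Sfun w i j + Sfun w j t"
    by (rule S_add[OF assms(1)]) (use ij in auto)
  ultimately show "Sfun w i t \<noteq> Sfun w j t" by simp
qed

lemma S_lip:
  assumes "good w" "0 < c" "\<And>x. 0 \<le> x \<Longrightarrow> c \<le> w x" "0 \<le> t" "0 \<le> t'"
  shows "\<bar>Sfun w 0 t' - Sfun w 0 t\<bar> \<le> \<bar>t' - t\<bar> / c"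
proof -
  have *: "\<bar>Sfun w 0 b - Sfun w 0 a\<bar> \<le> \<bar>b - a\<bar> / c" if ab: "0 \<le> a" "a \<le> b" for a b
  proof -
    have "Sfun w 0 b = Sfun w 0 a + Sfun w a b" by (rule S_add[OF assms(1)]) (use ab in auto)
    moreover have "Sfun w a b \<le> (b - a) / c" by (rule S_upper[OF assms(1,2)]) (use ab assms(3) in auto)
    moreover have "0 \<le> Sfun w a b" by (rule S_nonneg[OF assms(1) ab(1)])
    ultimately show ?thesis using ab by simp
  qed
  show ?thesis
  proof (cases "t \<le> t'")
    case True then show ?thesis using *[of t t'] assms by simp
  next
    case False then show ?thesis using *[of t' t] assms by (simp add: abs_minus_commute)
  qed
qed

lemma S_cont:
  assumes "good w" "0 < c" "\<And>x. 0 \<le> x \<Longrightarrow> c \<le> w x" "\<And>n. 0 \<le> u n" "u \<longlonglongrightarrow> a"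
  shows "(\<lambda>n. Sfun w 0 (u n)) \<longlonglongrightarrow> Sfun w 0 a"
proof -
  have a0: "0 \<le> a" using assms(4,5) by (metis LIMSEQ_le_const)
  have "(\<lambda>n. Sfun w 0 (u n) - Sfun w 0 a) \<longlonglongrightarrow> 0"
  proof (rule Lim_null_comparison)
    show "eventually (\<lambda>n. norm (Sfun w 0 (u n) - Sfun w 0 a) \<le> \<bar>u n - a\<bar> / c) sequentially"
      using S_lip[OF assms(1-3) a0 assms(4)] by simp
    have "(\<lambda>n. \<bar>u n - a\<bar> / c) \<longlonglongrightarrow> \<bar>a - a\<bar> / c" using assms(2,5) by (intro tendsto_intros) auto
    then show "(\<lambda>n. \<bar>u n - a\<bar> / c) \<longlonglongrightarrow> 0" by simp
  qed
  then show ?thesis by (rule LIM_zero_cancel)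
qed

locale fluid =
  fixes lam :: real and \<theta> \<zeta>0 :: "(ennreal \<times> ennreal) measure"
  assumes fd: "fluid_data lam \<theta> \<zeta>0"
begin

lemma lam_pos: "0 < lam" using fd unfolding fluid_data_def by auto
lemma pth: "prob_space \<theta>" using fd unfolding fluid_data_def by auto
lemma sth: "sets \<theta> = sets borel" using fd unfolding fluid_data_def by auto
lemma fth: "finite_measure \<theta>"
proof -
  interpret prob_space \<theta> by (rule pth)
  show ?thesis by unfold_locales
qed
lemma fze: "finite_measure \<zeta>0" using fd unfolding fluid_data_def by auto
lemma sze: "sets \<zeta>0 = sets borel" using fd unfolding fluid_data_def by auto

lemma ze_fst0: "emeasure \<zeta>0 {x. fst x = ennreal r} = 0"
proof -
  have e: "{x. fst x = ennreal r} = {ennreal r} \<times> UNIV" by auto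
  have "\<forall>x. x \<noteq> \<infinity> \<longrightarrow> emeasure \<zeta>0 ({x} \<times> UNIV) = 0" using fd unfolding fluid_data_def by blast
  then have "emeasure \<zeta>0 ({ennreal r} \<times> UNIV) = 0" by simp
  then show ?thesis unfolding e .
qed
lemma ze_snd0: "emeasure \<zeta>0 {x. snd x = ennreal r} = 0"
proof -
  have e: "{x. snd x = ennreal r} = UNIV \<times> {ennreal r}" by auto
  have "\<forall>x. x \<noteq> \<infinity> \<longrightarrow> emeasure \<zeta>0 (UNIV \<times> {x}) = 0" using fd unfolding fluid_data_def by blast
  then have "emeasure \<zeta>0 (UNIV \<times> {ennreal r}) = 0" by simp
  then show ?thesis unfolding e .
qed
lemma th_fst0: "emeasure \<theta> {x. fst x = 0} = 0"
proof -
  have e: "{x. fst x = 0} = {0::ennreal} \<times> UNIV" by auto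
  have "emeasure \<theta> ({0} \<times> UNIV) = 0" using fd unfolding fluid_data_def by blast
  then show ?thesis unfolding e .
qed
lemma th_snd0: "emeasure \<theta> {x. snd x = 0} = 0"
proof -
  have e: "{x. snd x = 0} = UNIV \<times> {0::ennreal}" by auto
  have "emeasure \<theta> (UNIV \<times> {0}) = 0" using fd unfolding fluid_data_def by blast
  then show ?thesis unfolding e .
qed

lemma meas_box: "sets M = sets borel \<Longrightarrow> {x::ennreal\<times>ennreal. p < fst x \<and> q < snd x} \<in> sets M"
  using open_box_set by (metis borel_open)
lemma meas_fst: "sets M = sets borel \<Longrightarrow> {x::ennreal\<times>ennreal. fst x = p} \<in> sets M"
  using closed_fst_set by (metis borel_closed)
lemma meas_snd: "sets M = sets borel \<Longrightarrow> {x::ennreal\<times>ennreal. snd x = p} \<in> sets M"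
  using closed_snd_set by (metis borel_closed)

lemma Z0_eq: "measure \<zeta>0 {x. 0 < fst x \<and> 0 < snd x} = total_mass \<zeta>0"
proof -
  interpret finite_measure \<zeta>0 by (rule fze)
  have sp: "space \<zeta>0 = UNIV" using sets_eq_imp_space_eq[OF sze] by simp
  let ?A = "{x::ennreal\<times>ennreal. 0 < fst x \<and> 0 < snd x}"
  let ?B = "{x::ennreal\<times>ennreal. fst x = 0}"
  let ?C = "{x::ennreal\<times>ennreal. snd x = 0}"
  have mB: "measure \<zeta>0 ?B = 0" using ze_fst0[of 0] by (simp add: emeasure_eq_measure)
  have mC: "measure \<zeta>0 ?C = 0" using ze_snd0[of 0] by (simp add: emeasure_eq_measure)
  have "space \<zeta>0 = ?A \<union> (?B \<union> ?C)" by (auto simp: sp) (simp_all add: gr_zeroI)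
  moreover have "measure \<zeta>0 (?A \<union> (?B \<union> ?C)) \<le> measure \<zeta>0 ?A + measure \<zeta>0 (?B \<union> ?C)"
    by (rule measure_Un_le) (use meas_box[OF sze] meas_fst[OF sze] meas_snd[OF sze] in auto)
  moreover have "measure \<zeta>0 (?B \<union> ?C) \<le> measure \<zeta>0 ?B + measure \<zeta>0 ?C"
    by (rule measure_Un_le) (use meas_fst[OF sze] meas_snd[OF sze] in auto)
  ultimately have "measure \<zeta>0 (space \<zeta>0) \<le> measure \<zeta>0 ?A + (measure \<zeta>0 ?B + measure \<zeta>0 ?C)"
    by simp
  moreover have "measure \<zeta>0 ?A \<le> measure \<zeta>0 (space \<zeta>0)" by (rule bounded_measure)
  ultimately show ?thesis using mB mC unfolding total_mass_def by simp
qed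

lemma Phi_le: "0 \<le> t \<Longrightarrow> Phi lam \<theta> \<zeta>0 w t \<le> total_mass \<zeta>0 + lam * t"
proof -
  assume t: "0 \<le> t"
  interpret Z: finite_measure \<zeta>0 by (rule fze)
  interpret P: prob_space \<theta> by (rule pth)
  have "integral {0..t} (\<lambda>s. Gf \<theta> w s t) \<le> t"
  proof (cases "(\<lambda>s. Gf \<theta> w s t) integrable_on {0..t}")
    case True
    have "integral {0..t} (\<lambda>s. Gf \<theta> w s t) \<le> integral {0..t} (\<lambda>_. 1)"
      by (rule integral_le[OF True integrable_const_ivl]) (simp add: Gf_def)
    then show ?thesis using t by simp
  next
    case False then show ?thesis using t by (simp add: not_integrable_integral)
  qed
  moreover have "measure \<zeta>0 {x. ennreal (Sfun w 0 t) < fst x \<and> ennreal t < snd x} \<le> total_mass \<zeta>0"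
    unfolding total_mass_def by (rule Z.bounded_measure)
  ultimately show ?thesis unfolding Phi_def using lam_pos
    by (smt (verit) mult_left_mono)
qed

lemma Phi_mono:
  assumes "good w1" "good w2" "\<And>x. 0 \<le> x \<Longrightarrow> w1 x \<le> w2 x" "0 \<le> t"
  shows "Phi lam \<theta> \<zeta>0 w1 t \<le> Phi lam \<theta> \<zeta>0 w2 t"
proof -
  have A: "measure \<zeta>0 {x. ennreal (Sfun w1 0 t) < fst x \<and> ennreal t < snd x}
      \<le> measure \<zeta>0 {x. ennreal (Sfun w2 0 t) < fst x \<and> ennreal t < snd x}"
    by (rule box_mono[OF fze sze]) (use S_antimono[OF assms(1-3), of 0 t] in \<open>auto intro: ennreal_leI\<close>)
  have B: "integral {0..t} (\<lambda>s. Gf \<theta> w1 s t) \<le> integral {0..t} (\<lambda>s. Gf \<theta> w2 s t)"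
  proof (rule integral_le[OF G_int[OF fth sth assms(1,4)] G_int[OF fth sth assms(2,4)]])
    fix s assume s: "s \<in> {0..t}"
    show "Gf \<theta> w1 s t \<le> Gf \<theta> w2 s t" unfolding Gf_def
      by (rule box_mono[OF fth sth]) (use S_antimono[OF assms(1-3), of s t] s in \<open>auto intro: ennreal_leI\<close>)
  qed
  show ?thesis unfolding Phi_def using A B lam_pos by (smt (verit) mult_left_mono)
qed

lemma Phi_cont:
  assumes g: "good w" and c: "0 < c" and lb: "\<And>x. 0 \<le> x \<Longrightarrow> c \<le> w x"
    and ub: "\<And>x. 0 \<le> x \<Longrightarrow> w x \<le> total_mass \<zeta>0 + lam * x"
  shows "continuous_on {0..} (Phi lam \<theta> \<zeta>0 w)"
proof (rule continuous_on_sequentiallyI)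
  fix u a assume u: "\<forall>n. u n \<in> {0::real..}" and a: "a \<in> {0::real..}" and ua: "u \<longlonglongrightarrow> a"
  have u0: "\<And>n. 0 \<le> u n" using u by auto
  have a0: "0 \<le> a" using a by auto
  have S0: "(\<lambda>n. Sfun w 0 (u n)) \<longlonglongrightarrow> Sfun w 0 a" by (rule S_cont[OF g c lb u0 ua])
  have A: "(\<lambda>n. measure \<zeta>0 {x. ennreal (Sfun w 0 (u n)) < fst x \<and> ennreal (u n) < snd x})
     \<longlonglongrightarrow> measure \<zeta>0 {x. ennreal (Sfun w 0 a) < fst x \<and> ennreal a < snd x}"
    by (rule measA[OF fze sze S0 ua ze_fst0 ze_snd0])
  have B: "(\<lambda>n. integral {0..u n} (\<lambda>s. measure \<theta> {x. ennreal (Sfun w s (u n)) < fst x \<and> ennreal (u n - s) < snd x}))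
     \<longlonglongrightarrow> integral {0..a} (\<lambda>s. measure \<theta> {x. ennreal (Sfun w s a) < fst x \<and> ennreal (a - s) < snd x})"
  proof (rule intC[OF pth sth ua u0])
    show "(\<lambda>s. measure \<theta> {x. ennreal (Sfun w s (u n)) < fst x \<and> ennreal (u n - s) < snd x}) integrable_on {0..u n}" for n
      using G_int[OF fth sth g u0[of n]] unfolding Gf_def .
    show "(\<lambda>n. Sfun w s (u n)) \<longlonglongrightarrow> Sfun w s a" if s: "s \<in> {0..<a}" for s
    proof -
      have ev: "eventually (\<lambda>n. s < u n) sequentially" using order_tendstoD(1)[OF ua] s by auto
      have eq: "Sfun w 0 a - Sfun w 0 s = Sfun w s a" using S_add[OF g, of 0 s a] s by auto
      have l1: "(\<lambda>n. Sfun w 0 (u n) - Sfun w 0 s) \<longlonglongrightarrow> Sfun w s a"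
        unfolding eq[symmetric] using S0 by (intro tendsto_intros)
      have ev2: "eventually (\<lambda>n. Sfun w 0 (u n) - Sfun w 0 s = Sfun w s (u n)) sequentially"
      proof (rule eventually_mono[OF ev])
        fix n assume "s < u n"
        then have "Sfun w 0 (u n) = Sfun w 0 s + Sfun w s (u n)" by (intro S_add[OF g]) (use s in auto)
        then show "Sfun w 0 (u n) - Sfun w 0 s = Sfun w s (u n)" by simp
      qed
      show ?thesis by (rule Lim_transform_eventually[OF l1 ev2])
    qed
    show "\<And>s. s \<in> {0..<a} \<Longrightarrow> 0 \<le> Sfun w s a" using S_nonneg[OF g] by auto
    show "inj_on (\<lambda>s. Sfun w s a) {0..<a}"
    proof (rule S_inj[OF g])
      show "0 < total_mass \<zeta>0 + lam * a" using lb[OF a0] ub[OF a0] c by linarith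
      show "w x \<le> total_mass \<zeta>0 + lam * a" if "x \<in> {0..a}" for x
        using ub[of x] that lam_pos by (smt (verit, best) atLeastAtMost_iff mult_left_mono)
    qed
  qed
  show "(\<lambda>n. Phi lam \<theta> \<zeta>0 w (u n)) \<longlonglongrightarrow> Phi lam \<theta> \<zeta>0 w a"
    unfolding Phi_def Gf_def by (intro tendsto_add tendsto_mult_left A B)
qed

lemma mc_lemma:
  assumes g: "\<And>n. good (z n)" and c: "0 < c" and lb: "\<And>n x. 0 \<le> x \<Longrightarrow> c \<le> z n x"
    and dec: "\<And>n x. 0 \<le> x \<Longrightarrow> z (Suc n) x \<le> z n x"
    and lim: "\<And>x. 0 \<le> x \<Longrightarrow> (\<lambda>n. z n x) \<longlonglongrightarrow> zs x"
    and u: "0 \<le> u"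
  shows "(\<lambda>s. 1 / zs s) integrable_on {u..v} \<and> (\<lambda>n. Sfun (z n) u v) \<longlonglongrightarrow> Sfun zs u v"
  unfolding Sfun_def
proof (rule monotone_convergence_increasing)
  show "(\<lambda>s. 1 / z k s) integrable_on {u..v}" for k using good_int[OF g u] .
  show "1 / z k x \<le> 1 / z (Suc k) x" if "x \<in> {u..v}" for k x
  proof -
    have "0 \<le> x" using that u by auto
    then have "0 < z (Suc k) x" using lb[of x "Suc k"] c by linarith
    then show ?thesis using dec[OF \<open>0 \<le> x\<close>, of k] by (simp add: frac_le)
  qed
  show "(\<lambda>k. 1 / z k x) \<longlonglongrightarrow> 1 / zs x" if "x \<in> {u..v}" for x
  proof -
    have x0: "0 \<le> x" using that u by auto
    have "c \<le> zs x" using lim[OF x0] lb[OF x0] by (metis LIMSEQ_le_const)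
    then show ?thesis using c by (intro tendsto_intros lim[OF x0]) auto
  qed
  show "bounded (range (\<lambda>k. integral {u..v} (\<lambda>s. 1 / z k s)))"
    unfolding bounded_iff
  proof (intro exI ballI)
    fix y assume "y \<in> range (\<lambda>k. integral {u..v} (\<lambda>s. 1 / z k s))"
    then obtain k where y: "y = Sfun (z k) u v" unfolding Sfun_def by auto
    show "norm y \<le> \<bar>v - u\<bar> / c"
    proof (cases "u \<le> v")
      case True
      have "Sfun (z k) u v \<le> (v - u) / c" by (rule S_upper[OF g c]) (use lb u True in auto)
      then show ?thesis using S_nonneg[OF g u, of k v] y True by simp
    next
      case False then show ?thesis using y c unfolding Sfun_def by simp
    qed
  qed
qed

lemma limit_fixed:
  assumes g: "\<And>n. good (z n)" and c: "0 < c" and lb: "\<And>n x. 0 \<le> x \<Longrightarrow> c \<le> z n x"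
    and dec: "\<And>n x. 0 \<le> x \<Longrightarrow> z (Suc n) x \<le> z n x"
    and lim: "\<And>x. 0 \<le> x \<Longrightarrow> (\<lambda>n. z n x) \<longlonglongrightarrow> zs x"
    and it: "\<And>n x. 0 \<le> x \<Longrightarrow> Phi lam \<theta> \<zeta>0 (z n) x = z (Suc n) x"
    and ub: "\<And>x. 0 \<le> x \<Longrightarrow> zs x \<le> total_mass \<zeta>0 + lam * x"
  shows "good zs" "\<And>x. 0 \<le> x \<Longrightarrow> c \<le> zs x" "\<And>t. 0 \<le> t \<Longrightarrow> Phi lam \<theta> \<zeta>0 zs t = zs t"
proof -
  show lbs: "c \<le> zs x" if "0 \<le> x" for x using lim[OF that] lb[OF that] by (metis LIMSEQ_le_const)
  have mc: "(\<lambda>s. 1 / zs s) integrable_on {u..v} \<and> (\<lambda>n. Sfun (z n) u v) \<longlonglongrightarrow> Sfun zs u v"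
    if "0 \<le> u" for u v
    by (rule mc_lemma[OF g c]) (use lb dec lim that in auto)
  show gs: "good zs" unfolding good_def using mc lbs c by (auto intro: less_le_trans)
  fix t :: real assume t: "0 \<le> t"
  have A: "(\<lambda>n. measure \<zeta>0 {x. ennreal (Sfun (z n) 0 t) < fst x \<and> ennreal t < snd x})
     \<longlonglongrightarrow> measure \<zeta>0 {x. ennreal (Sfun zs 0 t) < fst x \<and> ennreal t < snd x}"
    using measA[OF fze sze conjunct2[OF mc[OF order_refl, of t]] tendsto_const ze_fst0 ze_snd0] by simp
  have B: "(\<lambda>n. integral {0..(\<lambda>_. t) n} (\<lambda>s. measure \<theta> {x. ennreal (Sfun (z n) s t) < fst x \<and> ennreal ((\<lambda>_. t) n - s) < snd x}))
     \<longlonglongrightarrow> integral {0..t} (\<lambda>s. measure \<theta> {x. ennreal (Sfun zs s t) < fst x \<and> ennreal (t - s) < snd x})"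
  proof (rule intC[OF pth sth tendsto_const])
    show "0 \<le> t" by fact
    show "(\<lambda>s. measure \<theta> {x. ennreal (Sfun (z n) s t) < fst x \<and> ennreal (t - s) < snd x}) integrable_on {0..t}" for n
      using G_int[OF fth sth g t] unfolding Gf_def .
    show "(\<lambda>n. Sfun (z n) s t) \<longlonglongrightarrow> Sfun zs s t" if s: "s \<in> {0..<t}" for s
      using mc[of s t] s by auto
    show "\<And>s. s \<in> {0..<t} \<Longrightarrow> 0 \<le> Sfun zs s t" using S_nonneg[OF gs] by auto
    show "inj_on (\<lambda>s. Sfun zs s t) {0..<t}"
    proof (rule S_inj[OF gs])
      show "0 < total_mass \<zeta>0 + lam * t" using lbs[OF t] ub[OF t] c by linarith
      show "zs x \<le> total_mass \<zeta>0 + lam * t" if "x \<in> {0..t}" for x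
        using ub[of x] that lam_pos by (smt (verit, best) atLeastAtMost_iff mult_left_mono)
    qed
  qed
  have "(\<lambda>n. Phi lam \<theta> \<zeta>0 (z n) t) \<longlonglongrightarrow> Phi lam \<theta> \<zeta>0 zs t"
    using B unfolding Phi_def Gf_def by (intro tendsto_add tendsto_mult_left A) simp
  moreover have "(\<lambda>n. Phi lam \<theta> \<zeta>0 (z n) t) \<longlonglongrightarrow> zs t"
    using LIMSEQ_Suc[OF lim[OF t]] it[OF t] by simp
  ultimately show "Phi lam \<theta> \<zeta>0 zs t = zs t" by (rule LIMSEQ_unique)
qed

end



lemma riem_sum_full:
  fixes b h :: real assumes h: "0 < h" and b: "real N * h < b"
  shows "(\<Sum>j\<in>{1..N}. if real j * h < b then h else 0) = real N * h"
proof -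
  have "(\<Sum>j\<in>{1..N}. if real j * h < b then h else 0) = (\<Sum>j\<in>{1..N}. h)"
  proof (rule sum.cong)
    fix j assume "j \<in> {1..N}"
    then have "real j * h \<le> real N * h" using h by (intro mult_right_mono) auto
    then show "(if real j * h < b then h else 0) = h" using b by auto
  qed simp
  then show ?thesis by simp
qed

lemma riem_count:
  fixes b h :: real assumes h: "0 < h"
  shows "min b (real N * h) \<le> (\<Sum>j\<in>{1..N}. if real j * h < b then h else 0) + h"
proof (induction N)
  case 0 then show ?case using h by simp
next
  case (Suc N)
  have split: "(\<Sum>j\<in>{1..Suc N}. if real j * h < b then h else 0) =
      (\<Sum>j\<in>{1..N}. if real j * h < b then h else 0) + (if real (Suc N) * h < b then h else 0)"
    by (simp add: sum.cl_ivl_Suc)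
  show ?case
  proof (cases "real (Suc N) * h < b")
    case True
    then have "real N * h < b" using h by (smt (verit) mult_right_mono of_nat_Suc)
    then show ?thesis unfolding split using riem_sum_full[OF h] True h by (simp add: algebra_simps)
  next
    case False
    show ?thesis
    proof (cases "real N * h < b")
      case True
      then show ?thesis unfolding split using riem_sum_full[OF h True] False h by (simp add: algebra_simps)
    next
      case False': False
      then show ?thesis unfolding split using Suc.IH False h by (auto simp: algebra_simps min_def split: if_splits)
    qed
  qed
qed

lemma riem_enn:
  fixes h :: real and b :: ennreal assumes h: "0 < h"
  shows "min b (ennreal (real N * h)) \<le> (\<Sum>j\<in>{1..N}. if ennreal (real j * h) < b then ennreal h else 0) + ennreal h"
proof (cases b)
  case (real r)
  have "(\<Sum>j\<in>{1..N}. if ennreal (real j * h) < b then ennreal h else 0)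
      = (\<Sum>j\<in>{1..N}. ennreal (if real j * h < r then h else 0))"
    by (rule sum.cong) (use real h in \<open>auto simp: ennreal_less_iff\<close>)
  also have "\<dots> = ennreal (\<Sum>j\<in>{1..N}. if real j * h < r then h else 0)"
    using h by (intro sum_ennreal) auto
  finally have e: "(\<Sum>j\<in>{1..N}. if ennreal (real j * h) < b then ennreal h else 0)
      = ennreal (\<Sum>j\<in>{1..N}. if real j * h < r then h else 0)" .
  have nn: "0 \<le> (\<Sum>j\<in>{1..N}. if real j * h < r then h else 0)" using h by (intro sum_nonneg) auto
  have "min b (ennreal (real N * h)) = ennreal (min r (real N * h))"
    using real h by (simp add: min_ennreal)
  also have "\<dots> \<le> ennreal ((\<Sum>j\<in>{1..N}. if real j * h < r then h else 0) + h)"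
    by (rule ennreal_leI[OF riem_count[OF h]])
  also have "\<dots> = (\<Sum>j\<in>{1..N}. if ennreal (real j * h) < b then ennreal h else 0) + ennreal h"
    unfolding e using nn h by simp
  finally show ?thesis .
next
  case top
  have "(\<Sum>j\<in>{1..N}. if ennreal (real j * h) < b then ennreal h else 0) = (\<Sum>j\<in>{1..N}. ennreal h)"
    by (rule sum.cong) (use top in auto)
  also have "\<dots> = ennreal (real N * h)" using h by (simp add: ennreal_mult ennreal_of_nat_eq_real_of_nat)
  finally show ?thesis by (simp add: top)
qed

context fluid begin

lemma sp_th: "space \<theta> = UNIV" using sets_eq_imp_space_eq[OF sth] by simp

lemma theta_R:
  "\<exists>V>0. \<exists>N>0. \<exists>\<delta>>0. 1 \<le> lam * (V / real N) *
      (\<Sum>j\<in>{1..N}. measure \<theta> {x. ennreal (real j * (V / real N)) < fst x \<and> ennreal \<delta> < snd x})"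
proof -
  interpret P: prob_space \<theta> by (rule pth)
  define f where "f n x = (if ennreal (1 / real (Suc n)) < snd x then min (fst x) (of_nat n) else (0::ennreal))"
    for n and x :: "ennreal \<times> ennreal"
  have meas_f: "f n \<in> borel_measurable \<theta>" for n
    unfolding f_def
  proof (rule measurable_If)
    show "(\<lambda>x::ennreal\<times>ennreal. min (fst x) (of_nat n)) \<in> borel_measurable \<theta>"
      unfolding measurable_cong_sets[OF sth refl]
      by (intro borel_measurable_continuous_onI continuous_intros)
    show "{x \<in> space \<theta>. ennreal (1 / real (Suc n)) < snd x} \<in> sets \<theta>"
    proof -
      have "open {x::ennreal\<times>ennreal. ennreal (1 / real (Suc n)) < snd x}"
        by (intro open_Collect_less continuous_intros)
      then show ?thesis using borel_open by (simp add: sp_th sth)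
    qed
  qed simp
  have inc: "incseq f"
  proof (rule incseq_SucI, rule le_funI)
    fix n and x :: "ennreal \<times> ennreal"
    have "ennreal (1 / real (Suc (Suc n))) \<le> ennreal (1 / real (Suc n))"
      by (intro ennreal_leI) (simp add: frac_le)
    moreover have "min (fst x) (of_nat n) \<le> min (fst x) (of_nat (Suc n))"
    proof -
      have "(of_nat n::ennreal) \<le> of_nat (Suc n)" by (rule of_nat_mono) simp
      then show ?thesis by (meson min.boundedI min.cobounded1 min.cobounded2 order_trans)
    qed
    ultimately show "f n x \<le> f (Suc n) x"
    proof (cases "ennreal (1 / real (Suc n)) < snd x")
      case True
      assume a1: "ennreal (1 / real (Suc (Suc n))) \<le> ennreal (1 / real (Suc n))"
        and a2: "min (fst x) (of_nat n) \<le> min (fst x) (of_nat (Suc n))"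
      have "ennreal (1 / real (Suc (Suc n))) < snd x" using le_less_trans[OF a1 True] .
      then show ?thesis using True a2 by (simp add: f_def)
    qed (simp add: f_def)
  qed
  have AE: "AE x in \<theta>. fst x \<le> (SUP n. f n x)"
    using AE_not_in[of "{x. snd x = 0}" \<theta>]
  proof (rule AE_mp[OF _ AE_I2])
    show "{x. snd x = 0} \<in> null_sets \<theta>" using th_snd0 meas_snd[OF sth] by (simp add: null_sets_def)
  next
    fix x :: "ennreal \<times> ennreal"
    show "x \<notin> {x. snd x = 0} \<longrightarrow> fst x \<le> (SUP n. f n x)"
    proof
      assume "x \<notin> {x. snd x = 0}"
      then have d0: "snd x \<noteq> 0" by simp
      show "fst x \<le> (SUP n. f n x)"
        unfolding le_SUP_iff
      proof (intro allI impI)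
        fix y assume y: "y < fst x"
        then have "y < top" using top.not_eq_extremum by fastforce
        then obtain n1 where n1: "y < of_nat n1" using ennreal_Ex_less_of_nat by blast
        obtain n2 where n2: "ennreal (1 / real (Suc n2)) < snd x"
        proof (cases "snd x")
          case (real d)
          then have "0 < d" using d0 by (metis ennreal_0 order_le_less)
          then obtain n where "inverse (real (Suc n)) < d" using reals_Archimedean by blast
          then have "ennreal (1 / real (Suc n)) < snd x" using real \<open>0 < d\<close>
            by (simp add: ennreal_lessI inverse_eq_divide)
          then show ?thesis using that by blast
        next
          case top then show ?thesis using that[of 0] by simp
        qed
        define n where "n = n1 + n2"
        have "ennreal (1 / real (Suc n)) \<le> ennreal (1 / real (Suc n2))"
          unfolding n_def by (intro ennreal_leI) (simp add: frac_le)
        then have c1: "ennreal (1 / real (Suc n)) < snd x" using n2 by (rule le_less_trans)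
        have "y < of_nat n" using n1 unfolding n_def
          by (meson le_add1 less_le_trans of_nat_mono)
        then have "y < f n x" unfolding f_def using c1 y by simp
        then show "\<exists>i\<in>UNIV. y < f i x" by blast
      qed
    qed
  qed
  define X where "X = (\<integral>\<^sup>+ x. fst x \<partial>\<theta>)"
  have "X \<le> (\<integral>\<^sup>+ x. (SUP n. f n x) \<partial>\<theta>)" unfolding X_def by (rule nn_integral_mono_AE[OF AE])
  also have "\<dots> = (SUP n. integral\<^sup>N \<theta> (f n))" by (rule nn_integral_monotone_convergence_SUP[OF inc meas_f])
  finally have XS: "X \<le> (SUP n. integral\<^sup>N \<theta> (f n))" .
  have lam: "0 < lam" by (rule lam_pos)
  have "1 < ennreal lam * X" using fd unfolding fluid_data_def X_def by auto
  then have "ennreal (1 / lam) * 1 < ennreal (1 / lam) * (ennreal lam * X)"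
    using lam by (intro ennreal_mult_strict_left_mono) auto
  also have "ennreal (1 / lam) * (ennreal lam * X) = X"
    using lam by (simp add: mult.assoc[symmetric] ennreal_mult[symmetric])
  finally have "ennreal (1 / lam) < X" by simp
  then have "ennreal (1 / lam) < (SUP n. integral\<^sup>N \<theta> (f n))" using XS by (rule less_le_trans)
  then obtain n where n: "ennreal (1 / lam) < integral\<^sup>N \<theta> (f n)" by (auto simp: less_SUP_iff)
  have "integral\<^sup>N \<theta> (f n) \<le> (\<integral>\<^sup>+ x. of_nat n \<partial>\<theta>)"
    by (rule nn_integral_mono) (auto simp: f_def)
  also have "\<dots> = of_nat n" by (simp add: P.emeasure_space_1)
  finally have en: "integral\<^sup>N \<theta> (f n) \<le> of_nat n" .
  then obtain e where e: "integral\<^sup>N \<theta> (f n) = ennreal e" "0 \<le> e"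
    by (cases "integral\<^sup>N \<theta> (f n)") (auto simp: top_unique)
  have e1: "1 / lam < e" using n e(1) ennreal_less_iff[of "1/lam" e] lam_pos by simp
  have en': "e \<le> real n" using en e by (simp add: ennreal_of_nat_eq_real_of_nat)
  define V where "V = real n"
  have V0: "0 < V" unfolding V_def using e1 en' lam by (smt (verit) divide_pos_pos)
  obtain N where N: "V / (e - 1 / lam) < real N" using reals_Archimedean2 by blast
  have eps: "0 < e - 1 / lam" using e1 by simp
  have N0: "0 < N" using N V0 eps by (metis divide_pos_pos of_nat_0_less_iff order_less_trans)
  define h where "h = V / real N"
  have h0: "0 < h" unfolding h_def using V0 N0 by simp
  have hlt: "h < e - 1 / lam" unfolding h_def using N N0 eps by (simp add: field_simps)
  have Nh: "real N * h = V" unfolding h_def using N0 by simp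
  define \<delta> where "\<delta> = 1 / real (Suc n)"
  have \<delta>0: "0 < \<delta>" unfolding \<delta>_def by simp
  define A where "A j = {x::ennreal\<times>ennreal. ennreal (real j * h) < fst x \<and> ennreal \<delta> < snd x}" for j
  have mA: "A j \<in> sets \<theta>" for j unfolding A_def by (rule meas_box[OF sth])
  have pw: "f n x \<le> (\<Sum>j\<in>{1..N}. ennreal h * indicator (A j) x) + ennreal h" for x
  proof (cases "ennreal \<delta> < snd x")
    case True
    have "f n x = min (fst x) (ennreal (real N * h))"
      unfolding f_def using True Nh by (simp add: \<delta>_def V_def ennreal_of_nat_eq_real_of_nat)
    also have "\<dots> \<le> (\<Sum>j\<in>{1..N}. if ennreal (real j * h) < fst x then ennreal h else 0) + ennreal h"
      by (rule riem_enn[OF h0])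
    also have "(\<Sum>j\<in>{1..N}. if ennreal (real j * h) < fst x then ennreal h else 0) = (\<Sum>j\<in>{1..N}. ennreal h * indicator (A j) x)"
      by (rule sum.cong) (use True in \<open>auto simp: A_def indicator_def\<close>)
    finally show ?thesis .
  next
    case False then show ?thesis by (simp add: f_def \<delta>_def)
  qed
  have I0: "ennreal e \<le> (\<integral>\<^sup>+ x. (\<Sum>j\<in>{1..N}. ennreal h * indicator (A j) x) + ennreal h \<partial>\<theta>)"
    unfolding e(1)[symmetric] by (rule nn_integral_mono) (rule pw)
  have I1: "(\<integral>\<^sup>+ x. (\<Sum>j\<in>{1..N}. ennreal h * indicator (A j) x) + ennreal h \<partial>\<theta>) = (\<integral>\<^sup>+ x. (\<Sum>j\<in>{1..N}. ennreal h * indicator (A j) x) \<partial>\<theta>) + (\<integral>\<^sup>+ x. ennreal h \<partial>\<theta>)"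
    by (rule nn_integral_add) (use mA in \<open>auto intro!: borel_measurable_sum borel_measurable_times_ennreal\<close>)
  have I2: "(\<integral>\<^sup>+ x. (\<Sum>j\<in>{1..N}. ennreal h * indicator (A j) x) \<partial>\<theta>) = (\<Sum>j\<in>{1..N}. (\<integral>\<^sup>+ x. ennreal h * indicator (A j) x \<partial>\<theta>))"
    by (rule nn_integral_sum) (use mA in \<open>auto intro!: borel_measurable_times_ennreal\<close>)
  have I3: "(\<Sum>j\<in>{1..N}. (\<integral>\<^sup>+ x. ennreal h * indicator (A j) x \<partial>\<theta>)) = (\<Sum>j\<in>{1..N}. ennreal h * emeasure \<theta> (A j))"
    by (rule sum.cong[OF refl]) (rule nn_integral_cmult_indicator[OF mA])
  have I4: "(\<integral>\<^sup>+ x. ennreal h \<partial>\<theta>) = ennreal h" by (simp add: P.emeasure_space_1)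
  have I5: "(\<Sum>j\<in>{1..N}. ennreal h * emeasure \<theta> (A j)) = (\<Sum>j\<in>{1..N}. ennreal (h * measure \<theta> (A j)))"
    by (rule sum.cong[OF refl]) (simp add: P.emeasure_eq_measure ennreal_mult h0 less_imp_le)
  have I6: "(\<Sum>j\<in>{1..N}. ennreal (h * measure \<theta> (A j))) = ennreal (\<Sum>j\<in>{1..N}. h * measure \<theta> (A j))"
    by (rule sum_ennreal) (simp add: h0 less_imp_le)
  have nnS: "0 \<le> (\<Sum>j\<in>{1..N}. h * measure \<theta> (A j))" using h0 by (intro sum_nonneg) simp
  have I7: "ennreal (\<Sum>j\<in>{1..N}. h * measure \<theta> (A j)) + ennreal h = ennreal ((\<Sum>j\<in>{1..N}. h * measure \<theta> (A j)) + h)"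
    by (rule ennreal_plus[symmetric]) (use nnS h0 in auto)
  have "ennreal e \<le> ennreal ((\<Sum>j\<in>{1..N}. h * measure \<theta> (A j)) + h)"
    using I0 unfolding I1 I2 I3 I4 I5 I6 I7 .
  then have "e \<le> (\<Sum>j\<in>{1..N}. h * measure \<theta> (A j)) + h"
    using nnS h0 by (subst (asm) ennreal_le_iff) auto
  then have "1 / lam < (\<Sum>j\<in>{1..N}. h * measure \<theta> (A j))" using hlt by linarith
  then have "lam * (1 / lam) < lam * (\<Sum>j\<in>{1..N}. h * measure \<theta> (A j))" using lam by (metis mult_strict_left_mono)
  then have "1 \<le> lam * h * (\<Sum>j\<in>{1..N}. measure \<theta> (A j))"
    using lam by (simp add: sum_distrib_left mult.assoc)
  then show ?thesis using V0 N0 \<delta>0 unfolding A_def h_def by blast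
qed

lemma riemann_lower:
  assumes g: "good w" and h: "0 \<le> h" and t: "0 \<le> t - real N * h" and k: "k \<le> N"
  shows "(\<Sum>j\<in>{1..k}. h * Gf \<theta> w (t - real j * h) t) \<le> integral {t - real k * h..t} (\<lambda>s. Gf \<theta> w s t)"
  using k
proof (induction k)
  case 0 then show ?case by simp
next
  case (Suc k)
  have Nh: "real N * h \<ge> 0" using h by simp
  have t0: "0 \<le> t" using t Nh by linarith
  have kh: "real (Suc k) * h \<le> real N * h" using Suc.prems h by (intro mult_right_mono) auto
  define lo where "lo = t - real (Suc k) * h"
  define mid where "mid = t - real k * h"
  have lo0: "0 \<le> lo" unfolding lo_def using t kh by linarith
  have lomid: "lo \<le> mid" unfolding lo_def mid_def using h by (simp add: algebra_simps)
  have midt: "mid \<le> t" unfolding mid_def using h by simp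
  have int: "(\<lambda>s. Gf \<theta> w s t) integrable_on {lo..t}"
    by (rule integrable_subinterval_real[OF G_int[OF fth sth g t0]]) (use lo0 in auto)
  have split: "integral {lo..t} (\<lambda>s. Gf \<theta> w s t) = integral {lo..mid} (\<lambda>s. Gf \<theta> w s t) + integral {mid..t} (\<lambda>s. Gf \<theta> w s t)"
    using Henstock_Kurzweil_Integration.integral_combine[OF lomid midt int] by simp
  have A1: "integral {lo..mid} (\<lambda>s. Gf \<theta> w lo t) \<le> integral {lo..mid} (\<lambda>s. Gf \<theta> w s t)"
  proof (rule integral_le[OF integrable_const_ivl integrable_subinterval_real[OF int]])
    show "{lo..mid} \<subseteq> {lo..t}" using midt by auto
    fix s assume "s \<in> {lo..mid}"
    then show "Gf \<theta> w lo t \<le> Gf \<theta> w s t" using midt lo0 by (intro G_mono[OF fth sth g]) auto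
  qed
  have A2: "integral {lo..mid} (\<lambda>s. Gf \<theta> w lo t) = h * Gf \<theta> w lo t"
  proof -
    have "mid - lo = h" unfolding lo_def mid_def by (simp add: algebra_simps)
    then show ?thesis using lomid by simp
  qed
  have A3: "(\<Sum>j\<in>{1..Suc k}. h * Gf \<theta> w (t - real j * h) t) = (\<Sum>j\<in>{1..k}. h * Gf \<theta> w (t - real j * h) t) + h * Gf \<theta> w lo t"
    unfolding lo_def by (simp add: sum.cl_ivl_Suc)
  have IH: "(\<Sum>j\<in>{1..k}. h * Gf \<theta> w (t - real j * h) t) \<le> integral {mid..t} (\<lambda>s. Gf \<theta> w s t)"
    unfolding mid_def using Suc.IH Suc.prems by simp
  have "(\<Sum>j\<in>{1..Suc k}. h * Gf \<theta> w (t - real j * h) t) \<le> integral {lo..t} (\<lambda>s. Gf \<theta> w s t)"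
    unfolding A3 split using A1 A2 IH by linarith
  then show ?case unfolding lo_def .
qed

lemma t0_exists:
  assumes Z: "0 < total_mass \<zeta>0"
  shows "\<exists>t0>0. total_mass \<zeta>0 / 2 \<le> measure \<zeta>0 {x. ennreal (t0 / (total_mass \<zeta>0 / 2)) < fst x \<and> ennreal t0 < snd x}"
proof -
  define a where "a = total_mass \<zeta>0 / 2"
  have a0: "0 < a" "a < total_mass \<zeta>0" using Z unfolding a_def by auto
  have l1: "(\<lambda>n. 1 / real (Suc n)) \<longlonglongrightarrow> 0" using LIMSEQ_Suc[OF lim_1_over_n] by simp
  have l2: "(\<lambda>n. (1 / real (Suc n)) / a) \<longlonglongrightarrow> 0" using tendsto_divide_zero[OF l1] by simp
  have "(\<lambda>n. measure \<zeta>0 {x. ennreal ((1 / real (Suc n)) / a) < fst x \<and> ennreal (1 / real (Suc n)) < snd x})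
      \<longlonglongrightarrow> measure \<zeta>0 {x. ennreal 0 < fst x \<and> ennreal 0 < snd x}"
    by (rule measA[OF fze sze l2 l1 ze_fst0 ze_snd0])
  then have "(\<lambda>n. measure \<zeta>0 {x. ennreal ((1 / real (Suc n)) / a) < fst x \<and> ennreal (1 / real (Suc n)) < snd x})
      \<longlonglongrightarrow> total_mass \<zeta>0" using Z0_eq by simp
  from order_tendstoD(1)[OF this a0(2)] obtain n where
    "a < measure \<zeta>0 {x. ennreal ((1 / real (Suc n)) / a) < fst x \<and> ennreal (1 / real (Suc n)) < snd x}"
    by (auto simp: eventually_sequentially)
  then show ?thesis unfolding a_def[symmetric] by (intro exI[of _ "1 / real (Suc n)"]) auto
qed

lemma lower_bound:
  assumes Z: "0 < total_mass \<zeta>0"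
  obtains a t0 c where "0 < c" "c \<le> a" "a \<le> total_mass \<zeta>0" "0 < t0"
    "\<And>w t. good w \<Longrightarrow> (\<And>x. 0 \<le> x \<Longrightarrow> c \<le> w x) \<Longrightarrow> (\<And>x. x \<in> {0..t0} \<Longrightarrow> a \<le> w x) \<Longrightarrow> 0 \<le> t
       \<Longrightarrow> c \<le> Phi lam \<theta> \<zeta>0 w t"
    "\<And>w t. good w \<Longrightarrow> (\<And>x. 0 \<le> x \<Longrightarrow> c \<le> w x) \<Longrightarrow> (\<And>x. x \<in> {0..t0} \<Longrightarrow> a \<le> w x) \<Longrightarrow> 0 \<le> t
       \<Longrightarrow> t \<le> t0 \<Longrightarrow> a \<le> Phi lam \<theta> \<zeta>0 w t"
proof -
  obtain V N \<delta> where V: "0 < V" and N: "0 < N" and \<delta>: "0 < \<delta>"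
    and R: "1 \<le> lam * (V / real N) *
      (\<Sum>j\<in>{1..N}. measure \<theta> {x. ennreal (real j * (V / real N)) < fst x \<and> ennreal \<delta> < snd x})"
    using theta_R by blast
  obtain t0 where t0: "0 < t0"
    and t0m: "total_mass \<zeta>0 / 2 \<le> measure \<zeta>0 {x. ennreal (t0 / (total_mass \<zeta>0 / 2)) < fst x \<and> ennreal t0 < snd x}"
    using t0_exists[OF Z] by blast
  define a where "a = total_mass \<zeta>0 / 2"
  define c where "c = min a (min (\<delta> / V) (t0 / V))"
  have a0: "0 < a" using Z unfolding a_def by simp
  have c0: "0 < c" unfolding c_def using a0 V \<delta> t0 by simp
  have ca: "c \<le> a" unfolding c_def by simp
  have cV1: "c * V \<le> \<delta>"
  proof -
    have "c \<le> \<delta> / V" unfolding c_def by simp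
    then have "c * V \<le> \<delta> / V * V" using V by (intro mult_right_mono) auto
    then show ?thesis using V by simp
  qed
  have cV2: "c * V \<le> t0"
  proof -
    have "c \<le> t0 / V" unfolding c_def by simp
    then have "c * V \<le> t0 / V * V" using V by (intro mult_right_mono) auto
    then show ?thesis using V by simp
  qed
  have lam: "0 < lam" by (rule lam_pos)
  have Bnn: "0 \<le> integral {0..t} (\<lambda>s. Gf \<theta> w s t)" if "good w" "0 \<le> t" for w t
    by (rule integral_nonneg[OF G_int[OF fth sth that]]) (simp add: Gf_def)
  have Phi_ge_B: "lam * integral {0..t} (\<lambda>s. Gf \<theta> w s t) \<le> Phi lam \<theta> \<zeta>0 w t" for w t
    unfolding Phi_def by simp
  have claim2: "a \<le> Phi lam \<theta> \<zeta>0 w t"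
    if g: "good w" and lb: "\<And>x. 0 \<le> x \<Longrightarrow> c \<le> w x" and la: "\<And>x. x \<in> {0..t0} \<Longrightarrow> a \<le> w x"
      and t: "0 \<le> t" and tt0: "t \<le> t0" for w t
  proof -
    have "Sfun w 0 t \<le> (t - 0) / a" by (rule S_upper[OF g a0]) (use la tt0 t in auto)
    also have "\<dots> \<le> t0 / a" using tt0 a0 by (simp add: divide_right_mono)
    finally have S: "Sfun w 0 t \<le> t0 / a" .
    have "measure \<zeta>0 {x. ennreal (t0 / a) < fst x \<and> ennreal t0 < snd x}
        \<le> measure \<zeta>0 {x. ennreal (Sfun w 0 t) < fst x \<and> ennreal t < snd x}"
      by (rule box_mono[OF fze sze]) (use S tt0 in \<open>auto intro: ennreal_leI\<close>)
    moreover have "0 \<le> lam * integral {0..t} (\<lambda>s. Gf \<theta> w s t)" using Bnn[OF g t] lam by simp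
    ultimately show ?thesis using t0m unfolding Phi_def a_def[symmetric] by linarith
  qed
  have claim1: "c \<le> Phi lam \<theta> \<zeta>0 w t"
    if g: "good w" and lb: "\<And>x. 0 \<le> x \<Longrightarrow> c \<le> w x" and la: "\<And>x. x \<in> {0..t0} \<Longrightarrow> a \<le> w x"
      and t: "0 \<le> t" for w t
  proof (cases "t \<le> t0")
    case True then show ?thesis using claim2[OF g lb la t True] ca by linarith
  next
    case False
    define h where "h = c * (V / real N)"
    have h0: "0 \<le> h" unfolding h_def using c0 V by simp
    have Nh: "real N * h = c * V" unfolding h_def using N by simp
    have tNh: "0 \<le> t - real N * h" using Nh cV2 False by linarith
    have RL: "(\<Sum>j\<in>{1..N}. h * Gf \<theta> w (t - real j * h) t) \<le> integral {t - real N * h..t} (\<lambda>s. Gf \<theta> w s t)"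
      by (rule riemann_lower[OF g h0 tNh order_refl])
    have int: "(\<lambda>s. Gf \<theta> w s t) integrable_on {0..t}" by (rule G_int[OF fth sth g t])
    have "integral {0..t} (\<lambda>s. Gf \<theta> w s t) = integral {0..t - real N * h} (\<lambda>s. Gf \<theta> w s t) + integral {t - real N * h..t} (\<lambda>s. Gf \<theta> w s t)"
      using Henstock_Kurzweil_Integration.integral_combine[OF tNh _ int] h0 N by simp
    moreover have "0 \<le> integral {0..t - real N * h} (\<lambda>s. Gf \<theta> w s t)"
      by (rule integral_nonneg[OF integrable_subinterval_real[OF int]]) (use h0 in \<open>auto simp: Gf_def\<close>)
    ultimately have B1: "integral {t - real N * h..t} (\<lambda>s. Gf \<theta> w s t) \<le> integral {0..t} (\<lambda>s. Gf \<theta> w s t)" by simp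
    have each: "measure \<theta> {x. ennreal (real j * (V / real N)) < fst x \<and> ennreal \<delta> < snd x} \<le> Gf \<theta> w (t - real j * h) t"
      if j: "j \<in> {1..N}" for j
    proof -
      have jh: "real j * h \<le> real N * h" using j h0 by (intro mult_right_mono) auto
      have "Sfun w (t - real j * h) t \<le> (t - (t - real j * h)) / c"
        by (rule S_upper[OF g c0]) (use lb tNh jh h0 in auto)
      also have "\<dots> = real j * (V / real N)" unfolding h_def using c0 by simp
      finally have S: "Sfun w (t - real j * h) t \<le> real j * (V / real N)" .
      have D: "t - (t - real j * h) \<le> \<delta>" using jh Nh cV1 by simp
      show ?thesis unfolding Gf_def
        by (rule box_mono[OF fth sth]) (use S D in \<open>auto intro: ennreal_leI\<close>)
    qed
    define m where "m j = measure \<theta> {x. ennreal (real j * (V / real N)) < fst x \<and> ennreal \<delta> < snd x}" for j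
    have "h * (\<Sum>j\<in>{1..N}. m j) = (\<Sum>j\<in>{1..N}. h * m j)" by (simp add: sum_distrib_left)
    also have "\<dots> \<le> (\<Sum>j\<in>{1..N}. h * Gf \<theta> w (t - real j * h) t)"
      by (rule sum_mono) (use each h0 in \<open>auto simp: m_def intro: mult_left_mono\<close>)
    finally have hm: "h * (\<Sum>j\<in>{1..N}. m j) \<le> integral {0..t} (\<lambda>s. Gf \<theta> w s t)" using RL B1 by linarith
    have "c * 1 \<le> c * (lam * (V / real N) * (\<Sum>j\<in>{1..N}. m j))"
      using R c0 unfolding m_def by (intro mult_left_mono) auto
    also have "\<dots> = lam * (h * (\<Sum>j\<in>{1..N}. m j))" unfolding h_def by (simp add: algebra_simps)
    also have "\<dots> \<le> lam * integral {0..t} (\<lambda>s. Gf \<theta> w s t)" using hm lam by (simp add: mult_left_mono)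
    also have "\<dots> \<le> Phi lam \<theta> \<zeta>0 w t" by (rule Phi_ge_B)
    finally show ?thesis by simp
  qed
  show ?thesis
    by (rule that[OF c0 ca _ t0 claim1 claim2]) (use Z in \<open>auto simp: a_def\<close>)
qed

lemma good_cont:
  assumes "continuous_on {0..} w" "\<And>t. 0 \<le> t \<Longrightarrow> 0 < w t"
  shows "good w"
  unfolding good_def
proof (intro conjI allI impI)
  fix u v :: real assume u: "0 \<le> u"
  have "continuous_on {u..v} w" using assms(1) by (rule continuous_on_subset) (use u in auto)
  moreover have "\<forall>s\<in>{u..v}. w s \<noteq> 0"
  proof
    fix s assume "s \<in> {u..v}"
    then have "0 \<le> s" using u by auto
    then show "w s \<noteq> 0" using assms(2)[of s] by simp
  qed
  ultimately have "continuous_on {u..v} (\<lambda>s. 1 / w s)"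
    by (intro continuous_on_divide continuous_on_const)
  then show "(\<lambda>s. 1 / w s) integrable_on {u..v}" by (rule integrable_continuous_interval)
qed (use assms in auto)

lemma main_exists:
  assumes Z: "0 < total_mass \<zeta>0"
  shows "\<exists>zs. fluid_solution lam \<theta> \<zeta>0 zs \<and> zs 0 = total_mass \<zeta>0 \<and>
           (\<forall>z. fluid_solution lam \<theta> \<zeta>0 z \<and> z 0 = total_mass \<zeta>0 \<longrightarrow> (\<forall>t\<ge>0. z t \<le> zs t))"
proof -
  show ?thesis
  proof (rule lower_bound[OF Z])
    fix a t0 c
    assume c0: "0 < c" and ca: "c \<le> a" and aZ: "a \<le> total_mass \<zeta>0" and t0: "0 < t0"
    and LB1: "\<And>w t. good w \<Longrightarrow> (\<And>x. 0 \<le> x \<Longrightarrow> c \<le> w x) \<Longrightarrow> (\<And>x. x \<in> {0..t0} \<Longrightarrow> a \<le> w x) \<Longrightarrow> 0 \<le> t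
         \<Longrightarrow> c \<le> Phi lam \<theta> \<zeta>0 w t"
    and LB2: "\<And>w t. good w \<Longrightarrow> (\<And>x. 0 \<le> x \<Longrightarrow> c \<le> w x) \<Longrightarrow> (\<And>x. x \<in> {0..t0} \<Longrightarrow> a \<le> w x) \<Longrightarrow> 0 \<le> t
         \<Longrightarrow> t \<le> t0 \<Longrightarrow> a \<le> Phi lam \<theta> \<zeta>0 w t"
    have lam: "0 < lam" by (rule lam_pos)
    define U where "U x = total_mass \<zeta>0 + lam * x" for x
    define z where "z n = (Phi lam \<theta> \<zeta>0 ^^ n) U" for n
    have z0: "z 0 = U" unfolding z_def by simp
    have zS: "z (Suc n) = Phi lam \<theta> \<zeta>0 (z n)" for n unfolding z_def by simp
    define Inv where "Inv w \<longleftrightarrow> good w \<and> (\<forall>x\<ge>0. c \<le> w x) \<and> (\<forall>x\<in>{0..t0}. a \<le> w x) \<and> (\<forall>x\<ge>0. w x \<le> U x)" for w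
    have U_ge: "total_mass \<zeta>0 \<le> U x" if "0 \<le> x" for x unfolding U_def using lam that by simp
    have InvU: "Inv U"
      unfolding Inv_def
    proof (intro conjI allI impI ballI)
      show "good U"
      proof (rule good_cont)
        show "continuous_on {0..} U" unfolding U_def by (intro continuous_intros)
        show "0 < U t" if "0 \<le> t" for t using U_ge[OF that] Z by linarith
      qed
      show "c \<le> U x" if "0 \<le> x" for x using U_ge[OF that] ca aZ by linarith
      show "a \<le> U x" if "x \<in> {0..t0}" for x using U_ge[of x] that aZ by auto
    qed simp
    have InvS: "Inv (Phi lam \<theta> \<zeta>0 w)" if I: "Inv w" for w
    proof -
      have g: "good w" and lb: "\<And>x. 0 \<le> x \<Longrightarrow> c \<le> w x" and la: "\<And>x. x \<in> {0..t0} \<Longrightarrow> a \<le> w x"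
        and ub: "\<And>x. 0 \<le> x \<Longrightarrow> w x \<le> total_mass \<zeta>0 + lam * x"
        using I unfolding Inv_def U_def by auto
      have lbP: "c \<le> Phi lam \<theta> \<zeta>0 w x" if "0 \<le> x" for x by (rule LB1[OF g lb la that])
      have "good (Phi lam \<theta> \<zeta>0 w)"
      proof (rule good_cont)
        show "continuous_on {0..} (Phi lam \<theta> \<zeta>0 w)" by (rule Phi_cont[OF g c0 lb ub])
        show "0 < Phi lam \<theta> \<zeta>0 w t" if "0 \<le> t" for t using lbP[OF that] c0 by linarith
      qed
      then show ?thesis unfolding Inv_def
        using lbP LB2[OF g lb la] Phi_le unfolding U_def by auto
    qed
    have Invz: "Inv (z n)" for n
      by (induction n) (simp_all add: z0 zS InvU InvS)
    have gz: "good (z n)" and lbz: "\<And>x. 0 \<le> x \<Longrightarrow> c \<le> z n x" and ubz: "\<And>x. 0 \<le> x \<Longrightarrow> z n x \<le> U x" for n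
      using Invz[of n] unfolding Inv_def by auto
    have dec: "z (Suc n) x \<le> z n x" if "0 \<le> x" for n x
      using that
    proof (induction n arbitrary: x)
      case 0 then show ?case using Phi_le[OF 0] by (simp add: zS z0 U_def)
    next
      case (Suc n)
      have "Phi lam \<theta> \<zeta>0 (z (Suc n)) x \<le> Phi lam \<theta> \<zeta>0 (z n) x"
        by (rule Phi_mono[OF gz gz Suc.IH Suc.prems])
      then show ?case by (simp add: zS)
    qed
    define zs where "zs x = lim (\<lambda>n. z n x)" for x
    have lim: "(\<lambda>n. z n x) \<longlonglongrightarrow> zs x" if x: "0 \<le> x" for x
    proof -
      have "Bseq (\<lambda>n. z n x)"
      proof (rule BseqI')
        fix n show "norm (z n x) \<le> U x" using lbz[OF x, of n] ubz[OF x, of n] c0 by simp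
      qed
      moreover have "monoseq (\<lambda>n. z n x)" by (rule decseq_imp_monoseq[OF decseq_SucI[where X="\<lambda>n. z n x", OF dec[OF x]]])
      ultimately have "convergent (\<lambda>n. z n x)" by (rule Bseq_monoseq_convergent)
      then show ?thesis unfolding zs_def by (simp add: convergent_LIMSEQ_iff)
    qed
    have ubs: "zs x \<le> total_mass \<zeta>0 + lam * x" if "0 \<le> x" for x
      using LIMSEQ_le_const2[OF lim[OF that]] ubz[OF that] unfolding U_def by blast
    have it: "Phi lam \<theta> \<zeta>0 (z n) x = z (Suc n) x" for n x by (simp add: zS)
    note LF = limit_fixed[where z=z and c=c and zs=zs, OF gz c0]
    have gs: "good zs" by (rule LF(1)) (use lbz dec lim it ubs in auto)
    have lbs: "c \<le> zs x" if "0 \<le> x" for x by (rule LF(2)) (use lbz dec lim it ubs that in auto)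
    have fixp: "Phi lam \<theta> \<zeta>0 zs t = zs t" if "0 \<le> t" for t by (rule LF(3)) (use lbz dec lim it ubs that in auto)
    have cont: "continuous_on {0..} zs"
    proof -
      have "continuous_on {0..} (Phi lam \<theta> \<zeta>0 zs)" by (rule Phi_cont[OF gs c0 lbs ubs])
      then show ?thesis by (rule continuous_on_cong[THEN iffD1, OF refl, rotated]) (use fixp in auto)
    qed
    have sol: "fluid_solution lam \<theta> \<zeta>0 zs"
      unfolding fluid_solution_def
    proof (intro conjI allI impI)
      show "continuous_on {0..} zs" by (rule cont)
      show "0 \<le> zs t" if "0 \<le> t" for t using lbs[OF that] c0 by linarith
      show "\<exists>c>0. \<forall>t>a'. c \<le> zs t" if "0 < a'" for a' using lbs c0 that by (intro exI[of _ c]) auto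
      show "zs t = measure \<zeta>0 {x. ennreal (Sfun zs 0 t) < fst x \<and> ennreal t < snd x} +
          lam * integral {0..t} (\<lambda>s. measure \<theta> {x. ennreal (Sfun zs s t) < fst x \<and> ennreal (t - s) < snd x})"
        if "0 \<le> t" for t using fixp[OF that] unfolding Phi_def Gf_def by simp
    qed
    have zs0: "zs 0 = total_mass \<zeta>0"
    proof -
      have "Sfun zs 0 0 = 0" unfolding Sfun_def by simp
      then have "Phi lam \<theta> \<zeta>0 zs 0 = measure \<zeta>0 {x. 0 < fst x \<and> 0 < snd x}" unfolding Phi_def by simp
      then show ?thesis using fixp[of 0] Z0_eq by simp
    qed
    have maxi: "\<forall>t\<ge>0. z' t \<le> zs t" if z': "fluid_solution lam \<theta> \<zeta>0 z'" "z' 0 = total_mass \<zeta>0" for z'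
    proof -
      have cz: "continuous_on {0..} z'" and eqz: "\<And>t. 0 \<le> t \<Longrightarrow> z' t = Phi lam \<theta> \<zeta>0 z' t"
        and infz: "\<And>a'. 0 < a' \<Longrightarrow> \<exists>c>0. \<forall>t>a'. c \<le> z' t"
        using z'(1) unfolding fluid_solution_def Phi_def Gf_def by auto
      have pos: "0 < z' t" if "0 \<le> t" for t
      proof (cases "t = 0")
        case True then show ?thesis using z'(2) Z by simp
      next
        case False
        then have "0 < t / 2" using that by simp
        then obtain c' where "0 < c'" "\<forall>s>t/2. c' \<le> z' s" using infz by blast
        then show ?thesis using False that by (smt (verit) field_sum_of_halves)
      qed
      have gz': "good z'" by (rule good_cont[OF cz pos])
      have le: "z' x \<le> z n x" if "0 \<le> x" for n x
        using that
      proof (induction n arbitrary: x)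
        case 0 then show ?case using eqz[OF 0] Phi_le[OF 0] by (simp add: z0 U_def)
      next
        case (Suc n)
        have "Phi lam \<theta> \<zeta>0 z' x \<le> Phi lam \<theta> \<zeta>0 (z n) x"
          by (rule Phi_mono[OF gz' gz Suc.IH Suc.prems])
        then show ?case using eqz[OF Suc.prems] by (simp add: zS)
      qed
      show ?thesis using LIMSEQ_le_const[OF lim] le by blast
    qed
    show ?thesis using sol zs0 maxi by blast
  qed
qed

end

theorem mainTheorem6:
  fixes lam :: real and \<theta> \<zeta>0 :: "(ennreal \<times> ennreal) measure"
  assumes "fluid_data lam \<theta> \<zeta>0"
    and "total_mass \<zeta>0 > 0"
  shows "\<exists>zs. fluid_solution lam \<theta> \<zeta>0 zs \<and> zs 0 = total_mass \<zeta>0 \<and>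
           (\<forall>z. fluid_solution lam \<theta> \<zeta>0 z \<and> z 0 = total_mass \<zeta>0 \<longrightarrow>
                (\<forall>t\<ge>0. z t \<le> zs t))"
proof -
  interpret fluid lam \<theta> \<zeta>0 by (rule fluid.intro) (rule assms(1))
  show ?thesis by (rule main_exists[OF assms(2)])
qed

end
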